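(* Let $Y$ be a Banach lattice. Suppose that $F_1,F_2\colon Y\to\mathbb R\cup\{+\infty\}$ satisfy $F_1\ll_{\mathrm Q}F_2$ and that $H\colon Y\to\mathbb R\cup\{+\infty\}$ is totally substitutable. Then $F_1+H\ll_{\mathrm Q}F_2+H$.
   Context: In a Banach lattice, $\wedge,\vee$ are the lattice inf/sup, $\mu^+=\mu\vee0$ and $[a,b]=\{m:a\leq m\leq b\}$. For functions, $G_2\ll_{\mathrm Q}G_1$ means: for all $\mu_1,\mu_2\in Y$ and every $t_{21}\in[0,(\mu_2-\mu_1)^+]$ there exists $t_{12}\in[0,(\mu_1-\mu_2)^+]$ with $G_1(\mu_1+t_{21}-t_{12})+G_2(\mu_2-t_{21}+t_{12})\leq G_1(\mu_1)+G_2(\mu_2)$. $H$ is totally substitutable if for all $\mu_1,\mu_2\in Y$ and all $\mu_1',\mu_2'\in[\mu_1\wedge\mu_2,\mu_1\vee\mu_2]$ with $\mu_1'+\mu_2'=\mu_1+\mu_2$, $H(\mu_1')+H(\mu_2')\leq H(\mu_1)+H(\mu_2)$. *)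

theory Defs
  imports "HOL-Analysis.Analysis"
begin

class banach_lattice = banach + ordered_real_vector + lattice +
  assumes lattice_norm: "sup x (- x) \<le> sup y (- y) \<Longrightarrow> norm x \<le> norm y"

text \<open>Functions Y -> R \<union> {+\<infinity>} are modelled as maps into ereal never taking -\<infinity>.\<close>
definition proper_ext :: "('a \<Rightarrow> ereal) \<Rightarrow> bool" where
  "proper_ext F \<longleftrightarrow> (\<forall>y. F y \<noteq> -\<infinity>)"

definition pos_part :: "'a::banach_lattice \<Rightarrow> 'a" where
  "pos_part m = sup m 0"

text \<open>G2 <<_Q G1\<close>
definition Q_below :: "('a::banach_lattice \<Rightarrow> ereal) \<Rightarrow> ('a \<Rightarrow> ereal) \<Rightarrow> bool" where
  "Q_below G2 G1 \<longleftrightarrow>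
     (\<forall>\<mu>1 \<mu>2 t21. t21 \<in> {0 .. pos_part (\<mu>2 - \<mu>1)} \<longrightarrow>
        (\<exists>t12 \<in> {0 .. pos_part (\<mu>1 - \<mu>2)}.
           G1 (\<mu>1 + t21 - t12) + G2 (\<mu>2 - t21 + t12) \<le> G1 \<mu>1 + G2 \<mu>2))"

definition totally_substitutable :: "('a::banach_lattice \<Rightarrow> ereal) \<Rightarrow> bool" where
  "totally_substitutable H \<longleftrightarrow>
     (\<forall>\<mu>1 \<mu>2 \<mu>1' \<mu>2'. \<mu>1' \<in> {inf \<mu>1 \<mu>2 .. sup \<mu>1 \<mu>2} \<longrightarrow> \<mu>2' \<in> {inf \<mu>1 \<mu>2 .. sup \<mu>1 \<mu>2}
        \<longrightarrow> \<mu>1' + \<mu>2' = \<mu>1 + \<mu>2 \<longrightarrow> H \<mu>1' + H \<mu>2' \<le> H \<mu>1 + H \<mu>2)"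

end

theory Submission
  imports Defs
begin

theorem proposition2p41:
  fixes F1 F2 H :: "'a::banach_lattice \<Rightarrow> ereal"
  assumes "proper_ext F1" and "proper_ext F2" and "proper_ext H"
    and "Q_below F1 F2"
    and "totally_substitutable H"
  shows "Q_below (\<lambda>y. F1 y + H y) (\<lambda>y. F2 y + H y)"
  unfolding Q_below_def
proof (intro allI impI)
  fix \<mu>1 \<mu>2 t21 :: 'a
  assume t21: "t21 \<in> {0 .. pos_part (\<mu>2 - \<mu>1)}"
  then obtain t12 where t12: "t12 \<in> {0 .. pos_part (\<mu>1 - \<mu>2)}"
    and F: "F2 (\<mu>1 + t21 - t12) + F1 (\<mu>2 - t21 + t12) \<le> F2 \<mu>1 + F1 \<mu>2"
    using assms(4) unfolding Q_below_def by blast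
  have p1: "pos_part (\<mu>2 - \<mu>1) \<le> sup \<mu>1 \<mu>2 - \<mu>1"
    unfolding pos_part_def
    by (intro sup_least) (simp_all add: le_diff_eq)
  have p2: "pos_part (\<mu>1 - \<mu>2) \<le> sup \<mu>1 \<mu>2 - \<mu>2"
    unfolding pos_part_def
    by (intro sup_least) (simp_all add: le_diff_eq)
  have p3: "pos_part (\<mu>1 - \<mu>2) \<le> \<mu>1 - inf \<mu>1 \<mu>2"
    unfolding pos_part_def
    by (intro sup_least) (simp_all add: le_diff_eq diff_le_eq)
  have p4: "pos_part (\<mu>2 - \<mu>1) \<le> \<mu>2 - inf \<mu>1 \<mu>2"
    unfolding pos_part_def
    by (intro sup_least) (simp_all add: le_diff_eq diff_le_eq)
  have a0: "0 \<le> t21" "t21 \<le> pos_part (\<mu>2 - \<mu>1)" using t21 by auto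
  have b0: "0 \<le> t12" "t12 \<le> pos_part (\<mu>1 - \<mu>2)" using t12 by auto
  have m1: "\<mu>1 + t21 - t12 \<in> {inf \<mu>1 \<mu>2 .. sup \<mu>1 \<mu>2}"
  proof -
    have "t21 - t12 \<le> sup \<mu>1 \<mu>2 - \<mu>1" using a0 b0 p1
      by (metis diff_le_eq le_add_same_cancel1 order_trans)
    moreover have "inf \<mu>1 \<mu>2 - \<mu>1 \<le> t21 - t12"
    proof -
      have "t12 \<le> \<mu>1 - inf \<mu>1 \<mu>2" using b0(2) p3 by (rule order_trans)
      then have "inf \<mu>1 \<mu>2 - \<mu>1 \<le> - t12" by (simp add: algebra_simps le_diff_eq diff_le_eq)
      also have "- t12 \<le> t21 - t12" using a0 by simp
      finally show ?thesis .
    qed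
    ultimately show ?thesis by (simp add: algebra_simps le_diff_eq diff_le_eq)
  qed
  have m2: "\<mu>2 - t21 + t12 \<in> {inf \<mu>1 \<mu>2 .. sup \<mu>1 \<mu>2}"
  proof -
    have "t12 - t21 \<le> sup \<mu>1 \<mu>2 - \<mu>2" using a0 b0 p2
      by (metis diff_le_eq le_add_same_cancel1 order_trans)
    moreover have "inf \<mu>1 \<mu>2 - \<mu>2 \<le> t12 - t21"
    proof -
      have "t21 \<le> \<mu>2 - inf \<mu>1 \<mu>2" using a0(2) p4 by (rule order_trans)
      then have "inf \<mu>1 \<mu>2 - \<mu>2 \<le> - t21" by (simp add: algebra_simps le_diff_eq diff_le_eq)
      also have "- t21 \<le> t12 - t21" using b0 by simp
      finally show ?thesis .
    qed
    ultimately show ?thesis by (simp add: algebra_simps le_diff_eq diff_le_eq)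
  qed
  have Hs: "H (\<mu>1 + t21 - t12) + H (\<mu>2 - t21 + t12) \<le> H \<mu>1 + H \<mu>2"
    using assms(5) m1 m2 unfolding totally_substitutable_def
    by (metis (no_types, lifting) add.commute diff_add_cancel add_diff_eq diff_diff_eq2 add.assoc)
  have "(F2 (\<mu>1 + t21 - t12) + F1 (\<mu>2 - t21 + t12)) + (H (\<mu>1 + t21 - t12) + H (\<mu>2 - t21 + t12))
      \<le> (F2 \<mu>1 + F1 \<mu>2) + (H \<mu>1 + H \<mu>2)"
    using F Hs by (rule add_mono)
  then have "F2 (\<mu>1 + t21 - t12) + H (\<mu>1 + t21 - t12) + (F1 (\<mu>2 - t21 + t12) + H (\<mu>2 - t21 + t12))
      \<le> F2 \<mu>1 + H \<mu>1 + (F1 \<mu>2 + H \<mu>2)"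
    by (simp add: ac_simps)
  then show "\<exists>t12\<in>{0..pos_part (\<mu>1 - \<mu>2)}.
       F2 (\<mu>1 + t21 - t12) + H (\<mu>1 + t21 - t12) + (F1 (\<mu>2 - t21 + t12) + H (\<mu>2 - t21 + t12))
       \<le> F2 \<mu>1 + H \<mu>1 + (F1 \<mu>2 + H \<mu>2)"
    using t12 by blast
qed

end
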